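(* If $h=1/p$, then for any weight matrix $V\in\mathbb{R}^{2p\times(d+1)}$, $\lVert\nabla^2_VL\rVert_{op}\le 5pL(V)$.
   Context: Huberized ReLU with bandwidth $h$: $\phi(z)=0$ for $z<0$, $z^2/(2h)$ for $z\in[0,h]$, $z-h/2$ for $z>h$; $\phi'(z)=0$ for $z<0$, $z/h$ on $[0,h]$, $1$ for $z>h$; weak second derivative $\gamma(z)=1/h$ for $z\in[0,h]$ and $0$ otherwise. Data $(x_1,y_1),\ldots,(x_n,y_n)$ with $x_s\in\mathbb{R}^{d+1}$, $\lVert x_s\rVert=1$, $y_s\in\{-1,1\}$. For $V$ with rows $v_1,\ldots,v_{2p}$ and fixed $u_1=\cdots=u_p=1$, $u_{p+1}=\cdots=u_{2p}=-1$: $f_V(x)=\sum_{i=1}^{2p}u_i\phi(v_i\cdot x)$, $L(V)=\frac1n\sum_s\ln(1+\exp(-y_sf_V(x_s)))$. The weak Hessian $\nabla^2_VL$ is the block matrix with blocks, for $i\ne j$, $\frac{u_iu_j}{n}\sum_s\frac{\phi'(v_i\cdot x_s)\phi'(v_j\cdot x_s)e^{y_sf_V(x_s)}}{(1+e^{y_sf_V(x_s)})^2}x_sx_s^\top$ and, for $i=j$, $\frac1n\sum_s\Big[\frac{-u_i\gamma(v_i\cdot x_s)y_s}{1+e^{y_sf_V(x_s)}}+\frac{\phi'(v_i\cdot x_s)^2e^{y_sf_V(x_s)}}{(1+e^{y_sf_V(x_s)})^2}\Big]x_sx_s^\top$. $\lVert\cdot\rVert_{op}$ is the operator norm. *)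

theory Defs
  imports "HOL-Analysis.Analysis"
begin

text \<open>Huberized ReLU with bandwidth h, its derivative and weak second derivative.\<close>
definition hrelu :: "real \<Rightarrow> real \<Rightarrow> real" where
  "hrelu h z = (if z < 0 then 0 else if z \<le> h then z\<^sup>2 / (2*h) else z - h/2)"

definition hrelu' :: "real \<Rightarrow> real \<Rightarrow> real" where
  "hrelu' h z = (if z < 0 then 0 else if z \<le> h then z / h else 1)"

definition hgamma :: "real \<Rightarrow> real \<Rightarrow> real" where
  "hgamma h z = (if 0 \<le> z \<and> z \<le> h then 1 / h else 0)"

text \<open>Neurons are indexed by 'k \<times> bool, where CARD('k) = p: the neurons (k,True)
  carry u = 1 (the first p), the neurons (k,False) carry u = -1 (the last p).\<close>
definition usign :: "'k \<times> bool \<Rightarrow> real" where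
  "usign i = (if snd i then 1 else -1)"

definition fV :: "real \<Rightarrow> real^'n^('k::finite \<times> bool) \<Rightarrow> real^'n \<Rightarrow> real" where
  "fV h V x = (\<Sum>i\<in>UNIV. usign i * hrelu h ((V $ i) \<bullet> x))"

definition lossL :: "real \<Rightarrow> (nat \<Rightarrow> real^'n) \<Rightarrow> (nat \<Rightarrow> real) \<Rightarrow> nat
    \<Rightarrow> real^'n^('k::finite \<times> bool) \<Rightarrow> real" where
  "lossL h xs ys n V = (1 / real n) * (\<Sum>s<n. ln (1 + exp (- ys s * fV h V (xs s))))"

definition outer :: "real^'n \<Rightarrow> real^'n^'n" where
  "outer x = (\<chi> a b. x $ a * x $ b)"

definition hess_block :: "real \<Rightarrow> (nat \<Rightarrow> real^'n) \<Rightarrow> (nat \<Rightarrow> real) \<Rightarrow> nat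
    \<Rightarrow> real^'n^('k::finite \<times> bool) \<Rightarrow> 'k \<times> bool \<Rightarrow> 'k \<times> bool \<Rightarrow> real^'n^'n" where
  "hess_block h xs ys n V i j =
     (1 / real n) *\<^sub>R (\<Sum>s<n.
        (let e = exp (ys s * fV h V (xs s)) in
         if i = j then
           (- usign i * hgamma h ((V $ i) \<bullet> xs s) * ys s / (1 + e)
            + (hrelu' h ((V $ i) \<bullet> xs s))\<^sup>2 * e / (1 + e)\<^sup>2)
         else
           usign i * usign j * hrelu' h ((V $ i) \<bullet> xs s) * hrelu' h ((V $ j) \<bullet> xs s)
             * e / (1 + e)\<^sup>2) *\<^sub>R outer (xs s))"

text \<open>The weak Hessian as a linear operator on the space of weight matrices
  (R^{2p \<times> (d+1)} with the Euclidean/Frobenius norm).\<close>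
definition hess_op :: "real \<Rightarrow> (nat \<Rightarrow> real^'n) \<Rightarrow> (nat \<Rightarrow> real) \<Rightarrow> nat
    \<Rightarrow> real^'n^('k::finite \<times> bool) \<Rightarrow> real^'n^('k \<times> bool) \<Rightarrow> real^'n^('k \<times> bool)" where
  "hess_op h xs ys n V W = (\<chi> i. \<Sum>j\<in>UNIV. hess_block h xs ys n V i j *v (W $ j))"

end

theory Submission
  imports Defs
begin

definition sgm :: "real \<Rightarrow> (nat \<Rightarrow> real^'n) \<Rightarrow> (nat \<Rightarrow> real) \<Rightarrow> real^'n^('k::finite \<times> bool) \<Rightarrow> nat \<Rightarrow> real" where
  "sgm h xs ys V s = 1 / (1 + exp (ys s * fV h V (xs s)))"
definition kap :: "real \<Rightarrow> (nat \<Rightarrow> real^'n) \<Rightarrow> (nat \<Rightarrow> real) \<Rightarrow> real^'n^('k::finite \<times> bool) \<Rightarrow> nat \<Rightarrow> real" where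
  "kap h xs ys V s = exp (ys s * fV h V (xs s)) / (1 + exp (ys s * fV h V (xs s)))\<^sup>2"
definition aa :: "real \<Rightarrow> (nat \<Rightarrow> real^'n) \<Rightarrow> real^'n^('k::finite \<times> bool) \<Rightarrow> nat \<Rightarrow> 'k \<times> bool \<Rightarrow> real" where
  "aa h xs V s i = usign i * hrelu' h ((V $ i) \<bullet> xs s)"
definition dd :: "real \<Rightarrow> (nat \<Rightarrow> real^'n) \<Rightarrow> (nat \<Rightarrow> real) \<Rightarrow> real^'n^('k::finite \<times> bool) \<Rightarrow> nat \<Rightarrow> 'k \<times> bool \<Rightarrow> real" where
  "dd h xs ys V s i = - usign i * hgamma h ((V $ i) \<bullet> xs s) * ys s * sgm h xs ys V s"

lemma usign_sq: "usign i * usign i = 1"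
  by (simp add: usign_def)

lemma block_eq:
  "hess_block h xs ys n V i j = (1 / real n) *\<^sub>R (\<Sum>s<n.
     ((if i = j then dd h xs ys V s i else 0) + kap h xs ys V s * aa h xs V s i * aa h xs V s j) *\<^sub>R outer (xs s))"
  unfolding hess_block_def
proof (intro arg_cong[where f="\<lambda>x. (1 / real n) *\<^sub>R x"] sum.cong refl arg_cong[where f="\<lambda>c. c *\<^sub>R outer (xs _)"])
  fix s
  show "(let e = exp (ys s * fV h V (xs s)) in if i = j then - usign i * hgamma h (V $ i \<bullet> xs s) * ys s / (1 + e) +
          (hrelu' h (V $ i \<bullet> xs s))\<^sup>2 * e / (1 + e)\<^sup>2 else usign i * usign j * hrelu' h (V $ i \<bullet> xs s) * hrelu' h (V $ j \<bullet> xs s) * e / (1 + e)\<^sup>2) =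
        (if i = j then dd h xs ys V s i else 0) + kap h xs ys V s * aa h xs V s i * aa h xs V s j"
  proof (cases "i = j")
    case True
    have u: "usign i * usign i = 1" by (rule usign_sq)
    have "(hrelu' h (V $ i \<bullet> xs s))\<^sup>2 = (usign i * usign i) * (hrelu' h (V $ i \<bullet> xs s))\<^sup>2" using u by simp
    then show ?thesis using True
      by (simp add: Let_def dd_def kap_def aa_def sgm_def power2_eq_square field_simps)
  next
    case False
    then show ?thesis by (simp add: Let_def kap_def aa_def)
  qed
qed

lemma outer_mult: "outer x *v w = (x \<bullet> w) *\<^sub>R x"
  by (simp add: vec_eq_iff matrix_vector_mult_def outer_def inner_vec_def sum_distrib_left mult_ac)

lemma mv_sum: fixes M :: "'s \<Rightarrow> real^'n^'m" shows "((c::real) *\<^sub>R (\<Sum>s\<in>S. f s *\<^sub>R M s)) *v w = c *\<^sub>R (\<Sum>s\<in>S. f s *\<^sub>R (M s *v w))"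
  by (simp add: vec_eq_iff matrix_vector_mult_def sum_component scaleR_sum_right vector_scaleR_component sum_distrib_left sum_distrib_right
      sum.swap[of _ S] mult_ac real_scaleR_def)

lemma norm_vec_scale: fixes x :: "real^'n" and c :: "'m::finite \<Rightarrow> real"
  shows "norm (\<chi> i. c i *\<^sub>R x) = norm (\<chi> i. c i) * norm x"
proof -
  have "norm (\<chi> i. c i *\<^sub>R x) = L2_set (\<lambda>i. norm (c i *\<^sub>R x)) UNIV"
    unfolding norm_vec_def[of "(\<chi> i. c i *\<^sub>R x)"] by simp
  also have "\<dots> = L2_set (\<lambda>i. norm (c i)) UNIV * norm x"
    by (simp only: norm_scaleR L2_set_left_distrib norm_ge_zero real_norm_def)
  also have "L2_set (\<lambda>i. norm (c i)) UNIV = norm (\<chi> i. c i)"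
    unfolding norm_vec_def[of "(\<chi> i. c i)"] by simp
  finally show ?thesis .
qed

lemma hess_op_eq:
  "hess_op h xs ys n V W = (1 / real n) *\<^sub>R (\<Sum>s<n. (\<chi> i. (dd h xs ys V s i * (xs s \<bullet> W $ i)
      + kap h xs ys V s * aa h xs V s i * (\<Sum>j\<in>UNIV. aa h xs V s j * (xs s \<bullet> W $ j))) *\<^sub>R xs s))"
proof -
  have c: "(\<Sum>j\<in>UNIV. ((if i = j then dd h xs ys V s i else 0) + kap h xs ys V s * aa h xs V s i * aa h xs V s j) * (xs s \<bullet> W $ j))
     = dd h xs ys V s i * (xs s \<bullet> W $ i) + kap h xs ys V s * aa h xs V s i * (\<Sum>j\<in>UNIV. aa h xs V s j * (xs s \<bullet> W $ j))" for i s
  proof -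
    have "\<And>j. ((if i = j then dd h xs ys V s i else 0) + kap h xs ys V s * aa h xs V s i * aa h xs V s j) * (xs s \<bullet> W $ j)
      = (if i = j then dd h xs ys V s i * (xs s \<bullet> W $ i) else 0) + kap h xs ys V s * aa h xs V s i * (aa h xs V s j * (xs s \<bullet> W $ j))"
      by (simp add: algebra_simps)
    then show ?thesis by (simp add: sum.distrib sum_distrib_left)
  qed
  show ?thesis
  proof (subst vec_eq_iff, intro allI)
    fix i
    have "hess_op h xs ys n V W $ i = (\<Sum>j\<in>UNIV. (1 / real n) *\<^sub>R (\<Sum>s<n.
       ((if i = j then dd h xs ys V s i else 0) + kap h xs ys V s * aa h xs V s i * aa h xs V s j) *\<^sub>R ((xs s \<bullet> W $ j) *\<^sub>R xs s)))"
      by (simp add: hess_op_def block_eq mv_sum outer_mult)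
    also have "\<dots> = (1 / real n) *\<^sub>R (\<Sum>s<n. (\<Sum>j\<in>UNIV.
       ((if i = j then dd h xs ys V s i else 0) + kap h xs ys V s * aa h xs V s i * aa h xs V s j) * (xs s \<bullet> W $ j)) *\<^sub>R xs s)"
      by (simp add: scaleR_sum_right[symmetric] scaleR_sum_left sum.swap[of _ UNIV])
    also have "\<dots> = ((1 / real n) *\<^sub>R (\<Sum>s<n. (\<chi> i. (dd h xs ys V s i * (xs s \<bullet> W $ i)
      + kap h xs ys V s * aa h xs V s i * (\<Sum>j\<in>UNIV. aa h xs V s j * (xs s \<bullet> W $ j))) *\<^sub>R xs s))) $ i"
      by (simp add: c sum_component)
    finally show "hess_op h xs ys n V W $ i = ((1 / real n) *\<^sub>R (\<Sum>s<n. (\<chi> i. (dd h xs ys V s i * (xs s \<bullet> W $ i)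
      + kap h xs ys V s * aa h xs V s i * (\<Sum>j\<in>UNIV. aa h xs V s j * (xs s \<bullet> W $ j))) *\<^sub>R xs s))) $ i" .
  qed
qed

lemma sample_bound:
  fixes x :: "real^'n" and W :: "real^'n^('k::finite \<times> bool)" and d a :: "'k \<times> bool \<Rightarrow> real"
  assumes nx: "norm x = 1" and dM: "\<And>i. \<bar>d i\<bar> \<le> M" and a1: "\<And>i. \<bar>a i\<bar> \<le> 1"
    and k0: "0 \<le> \<kappa>" and kS: "\<kappa> \<le> \<sigma>"
  shows "norm (\<chi> i. (d i * (x \<bullet> W $ i) + \<kappa> * a i * (\<Sum>j\<in>UNIV. a j * (x \<bullet> W $ j))) *\<^sub>R x)
    \<le> (M + 2 * real CARD('k) * \<sigma>) * norm W"
proof -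
  define z :: "real^('k \<times> bool)" where "z = (\<chi> j. x \<bullet> W $ j)"
  define av :: "real^('k \<times> bool)" where "av = (\<chi> j. a j)"
  define S where "S = (\<Sum>j\<in>UNIV. a j * (x \<bullet> W $ j))"
  have M0: "0 \<le> M" using dM[of undefined] by linarith
  have n2: "norm z \<le> norm W"
  proof -
    have "norm z = L2_set (\<lambda>i. \<bar>x \<bullet> W $ i\<bar>) UNIV"
      unfolding z_def norm_vec_def[of "(\<chi> j. x \<bullet> W $ j)"] by simp
    also have "\<dots> \<le> L2_set (\<lambda>i. norm (W $ i)) UNIV"
      by (rule L2_set_mono) (use Cauchy_Schwarz_ineq2[of x] nx in auto)
    also have "\<dots> = norm W" unfolding norm_vec_def[of W] ..
    finally show ?thesis .
  qed
  have n1: "norm (\<chi> i. d i * (x \<bullet> W $ i)) \<le> M * norm z"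
  proof -
    have "norm (\<chi> i. d i * (x \<bullet> W $ i)) = L2_set (\<lambda>i. \<bar>d i * (x \<bullet> W $ i)\<bar>) UNIV"
      unfolding norm_vec_def[of "(\<chi> i. d i * (x \<bullet> W $ i))"] by simp
    also have "\<dots> \<le> L2_set (\<lambda>i. M * \<bar>x \<bullet> W $ i\<bar>) UNIV"
      by (rule L2_set_mono) (auto simp: abs_mult intro!: mult_right_mono dM)
    also have "\<dots> = M * L2_set (\<lambda>i. \<bar>x \<bullet> W $ i\<bar>) UNIV"
      by (rule L2_set_right_distrib[OF M0, symmetric])
    also have "L2_set (\<lambda>i. \<bar>x \<bullet> W $ i\<bar>) UNIV = norm z"
      unfolding z_def norm_vec_def[of "(\<chi> j. x \<bullet> W $ j)"] by simp
    finally show ?thesis .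
  qed
  have n3: "norm ((\<kappa> * S) *\<^sub>R av) \<le> \<sigma> * (2 * real CARD('k)) * norm W"
  proof -
    have Sz: "S = av \<bullet> z" unfolding S_def av_def z_def inner_vec_def by simp
    have na: "(norm av)\<^sup>2 \<le> 2 * real CARD('k)"
    proof -
      have "(norm av)\<^sup>2 = (\<Sum>j\<in>UNIV. a j * a j)" by (simp add: power2_norm_eq_inner inner_vec_def av_def)
      also have "\<dots> \<le> (\<Sum>j\<in>(UNIV::('k \<times> bool) set). 1)"
      proof (rule sum_mono)
        fix j
        have "\<bar>a j\<bar> * \<bar>a j\<bar> \<le> 1 * 1" using a1[of j] by (intro mult_mono) auto
        then show "a j * a j \<le> 1" by (simp add: abs_mult[symmetric])
      qed
      also have "\<dots> = 2 * real CARD('k)" by simp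
      finally show ?thesis .
    qed
    have "norm ((\<kappa> * S) *\<^sub>R av) = \<kappa> * (\<bar>S\<bar> * norm av)" using k0 by (simp add: abs_mult)
    also have "\<dots> \<le> \<kappa> * ((norm av * norm z) * norm av)"
      using Sz Cauchy_Schwarz_ineq2[of av z] k0 by (intro mult_left_mono mult_right_mono) auto
    also have "\<dots> = \<kappa> * (norm av)\<^sup>2 * norm z" by (simp add: power2_eq_square)
    also have "\<dots> \<le> \<sigma> * (2 * real CARD('k)) * norm W"
      using k0 kS na \<open>norm z \<le> norm W\<close> by (intro mult_mono) auto
    finally show ?thesis .
  qed
  have "norm (\<chi> i. (d i * (x \<bullet> W $ i) + \<kappa> * a i * S) *\<^sub>R x) = norm (\<chi> i. d i * (x \<bullet> W $ i) + \<kappa> * a i * S)"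
    using norm_vec_scale[of "\<lambda>i. d i * (x \<bullet> W $ i) + \<kappa> * a i * S" x] nx by simp
  also have "(\<chi> i. d i * (x \<bullet> W $ i) + \<kappa> * a i * S) = (\<chi> i. d i * (x \<bullet> W $ i)) + (\<kappa> * S) *\<^sub>R av"
    by (simp add: vec_eq_iff av_def)
  also have "norm \<dots> \<le> norm (\<chi> i. d i * (x \<bullet> W $ i)) + norm ((\<kappa> * S) *\<^sub>R av)"
    by (rule norm_triangle_ineq)
  finally have "norm (\<chi> i. (d i * (x \<bullet> W $ i) + \<kappa> * a i * S) *\<^sub>R x)
      \<le> norm (\<chi> i. d i * (x \<bullet> W $ i)) + norm ((\<kappa> * S) *\<^sub>R av)" .
  moreover have "M * norm z \<le> M * norm W" using n2 M0 by (rule mult_left_mono)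
  ultimately have "norm (\<chi> i. (d i * (x \<bullet> W $ i) + \<kappa> * a i * S) *\<^sub>R x)
      \<le> M * norm W + \<sigma> * (2 * real CARD('k)) * norm W" using n1 n3 by linarith
  then show ?thesis unfolding S_def by (simp add: algebra_simps)
qed

lemma sig_le_ln: "1 / (1 + exp (t::real)) \<le> ln (1 + exp (- t))"
proof -
  define u where "u = 1 / (1 + exp (- t))"
  have p0: "0 < 1 + exp (- t)" using exp_gt_zero[of "-t"] by linarith
  then have u0: "0 < u" unfolding u_def by simp
  have "ln u \<le> u - 1" using ln_le_minus_one[OF u0] .
  moreover have "ln u = - ln (1 + exp (- t))" unfolding u_def
    by (simp add: ln_div add_pos_pos)
  moreover have "1 - u = 1 / (1 + exp t)"
  proof -
    have "1 - u = exp (- t) / (1 + exp (- t))" unfolding u_def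
      using p0 by (simp add: field_simps)
    also have "\<dots> = 1 / (1 + exp t)"
      by (simp add: exp_minus field_simps add_pos_pos)
    finally show ?thesis .
  qed
  ultimately show ?thesis by linarith
qed

lemma sample_bound2:
  fixes xs :: "nat \<Rightarrow> real^'n" and ys :: "nat \<Rightarrow> real" and V W :: "real^'n^('k::finite \<times> bool)"
  assumes h: "h > 0" and nx: "norm (xs s) = 1" and y: "ys s = 1 \<or> ys s = -1"
  shows "norm (\<chi> i. (dd h xs ys V s i * (xs s \<bullet> W $ i)
      + kap h xs ys V s * aa h xs V s i * (\<Sum>j\<in>UNIV. aa h xs V s j * (xs s \<bullet> W $ j))) *\<^sub>R xs s)
    \<le> (sgm h xs ys V s / h + 2 * real CARD('k) * sgm h xs ys V s) * norm W"
proof (rule sample_bound[OF nx])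
  define e where "e = exp (ys s * fV h V (xs s))"
  have e0: "0 < e" unfolding e_def by simp
  have sg: "sgm h xs ys V s = 1 / (1 + e)" unfolding sgm_def e_def ..
  have sg0: "0 \<le> sgm h xs ys V s" using e0 sg by simp
  have kp: "kap h xs ys V s = e / (1 + e)\<^sup>2" unfolding kap_def e_def ..
  show "0 \<le> kap h xs ys V s" using kp e0 by simp
  show "kap h xs ys V s \<le> sgm h xs ys V s"
  proof -
    have "e * (1 + e) \<le> 1 * (1 + e)\<^sup>2" using e0 by (simp add: power2_eq_square algebra_simps)
    then have "e / (1 + e)\<^sup>2 \<le> 1 / (1 + e)" using e0
      by (simp add: divide_simps power2_eq_square)
    then show ?thesis unfolding kp sg .
  qed
  fix i :: "'k \<times> bool"
  have u: "\<bar>usign i\<bar> = 1" by (simp add: usign_def)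
  have yy: "\<bar>ys s\<bar> = 1" using y by auto
  have g: "\<bar>hgamma h (V $ i \<bullet> xs s)\<bar> \<le> 1 / h" using h by (simp add: hgamma_def)
  show "\<bar>dd h xs ys V s i\<bar> \<le> sgm h xs ys V s / h"
  proof -
    have "\<bar>hgamma h (V $ i \<bullet> xs s)\<bar> * sgm h xs ys V s \<le> (1 / h) * sgm h xs ys V s"
      using g sg0 by (rule mult_right_mono)
    then show ?thesis using u yy sg0 by (simp add: abs_mult dd_def)
  qed
  have "\<bar>hrelu' h (V $ i \<bullet> xs s)\<bar> \<le> 1" using h by (simp add: hrelu'_def)
  then show "\<bar>aa h xs V s i\<bar> \<le> 1" unfolding aa_def using u by (simp add: abs_mult)
qed

theorem lemma2:
  fixes xs :: "nat \<Rightarrow> real^'n" and ys :: "nat \<Rightarrow> real" and n :: nat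
    and V :: "real^'n^('k::finite \<times> bool)"
  assumes "n > 0"
    and "\<forall>s<n. norm (xs s) = 1"
    and "\<forall>s<n. ys s = 1 \<or> ys s = -1"
  shows "onorm (hess_op (1 / real CARD('k)) xs ys n V)
           \<le> 5 * real CARD('k) * lossL (1 / real CARD('k)) xs ys n V"
proof -
  let ?p = "real CARD('k)"
  let ?h = "1 / real CARD('k)"
  let ?\<sigma> = "\<lambda>s. sgm ?h xs ys V s"
  have p0: "?p > 0" by simp
  have h0: "?h > 0" by simp
  have sg0: "0 \<le> ?\<sigma> s" for s
  proof -
    have "0 < 1 + exp (ys s * fV ?h V (xs s))" using exp_gt_zero[of "ys s * fV ?h V (xs s)"] by linarith
    then show ?thesis unfolding sgm_def by simp
  qed
  have n0: "0 < real n" using assms(1) by simp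
  have L: "(1 / real n) * (\<Sum>s<n. ?\<sigma> s) \<le> lossL ?h xs ys n V"
    unfolding lossL_def
  proof (rule mult_left_mono)
    show "(\<Sum>s<n. ?\<sigma> s) \<le> (\<Sum>s<n. ln (1 + exp (- ys s * fV ?h V (xs s))))"
    proof (rule sum_mono)
      fix s
      show "?\<sigma> s \<le> ln (1 + exp (- ys s * fV ?h V (xs s)))"
        using sig_le_ln[of "ys s * fV ?h V (xs s)"] unfolding sgm_def by simp
    qed
    show "0 \<le> 1 / real n" by simp
  qed
  have A0: "0 \<le> (1 / real n) * (\<Sum>s<n. ?\<sigma> s)" using sg0 by (simp add: sum_nonneg)
  show ?thesis
  proof (rule onorm_le)
    fix W :: "real^'n^('k \<times> bool)"
    let ?T = "\<lambda>s. (\<chi> i. (dd ?h xs ys V s i * (xs s \<bullet> W $ i)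
      + kap ?h xs ys V s * aa ?h xs V s i * (\<Sum>j\<in>UNIV. aa ?h xs V s j * (xs s \<bullet> W $ j))) *\<^sub>R xs s)"
    have "norm (hess_op ?h xs ys n V W) = (1 / real n) * norm (\<Sum>s<n. ?T s)"
      unfolding hess_op_eq by simp
    also have "\<dots> \<le> (1 / real n) * (\<Sum>s<n. norm (?T s))"
      by (rule mult_left_mono) (auto intro: norm_sum)
    also have "\<dots> \<le> (1 / real n) * (\<Sum>s<n. (?\<sigma> s / ?h + 2 * ?p * ?\<sigma> s) * norm W)"
    proof (rule mult_left_mono)
      show "(\<Sum>s<n. norm (?T s)) \<le> (\<Sum>s<n. (?\<sigma> s / ?h + 2 * ?p * ?\<sigma> s) * norm W)"
      proof (rule sum_mono)
        fix s assume "s \<in> {..<n}"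
        then show "norm (?T s) \<le> (?\<sigma> s / ?h + 2 * ?p * ?\<sigma> s) * norm W"
          using assms(2,3) by (intro sample_bound2[OF h0]) auto
      qed
    qed simp
    also have "\<dots> = 3 * ?p * ((1 / real n) * (\<Sum>s<n. ?\<sigma> s)) * norm W"
      by (simp add: sum_distrib_left sum_distrib_right algebra_simps)
    also have "\<dots> \<le> 5 * ?p * lossL ?h xs ys n V * norm W"
      using L A0 p0 by (intro mult_right_mono mult_mono) auto
    finally show "norm (hess_op ?h xs ys n V W) \<le> 5 * ?p * lossL ?h xs ys n V * norm W" .
  qed
qed

end
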